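(* Consider the single-sensor system $x_{k+1}=Ax_k+w_k$, $y_k=Cx_k+v_k$ ($w_k,v_k$ independent zero-mean Gaussian with covariances $Q,R$), $(A,C)$ detectable, $(A,Q^{1/2})$ stabilizable, with the local Kalman filter in steady state with filtered error covariance $\bar P$. Let $f(X)=AXA^T+Q$, $\mathcal{S}=\{f^n(\bar P):n\ge0\}$, $p,q\in[0,1]$, $E\ge0$, $\beta\in(0,1)$, $K\ge1$, and for $\gamma\in\{0,1\}$ let $c(\gamma)=\gamma(1-p)+(1-\gamma)q$. Define $J_k:\mathcal{S}\times\{0,1\}\to\mathbb{R}$ by $J_{K+1}\equiv0$ and, for $k=K,\dots,1$, $$J_k(P,\gamma)=\min_{\nu\in\{0,1\}}\Big\{\beta\big[\nu c(\gamma)\mathrm{tr}\bar P+(1-\nu c(\gamma))\mathrm{tr}f(P)\big]+(1-\beta)\nu E+\nu c(\gamma)J_{k+1}(\bar P,1)+(1-\nu c(\gamma))J_{k+1}(f(P),0)\Big\},$$ and for $k=1,\dots,K$, $\nu\in\{0,1\}$: $L_k^1(P,\nu)=\beta[\nu(1-p)\mathrm{tr}\bar P+(1-\nu(1-p))\mathrm{tr}f(P)]+(1-\beta)\nu E+\nu(1-p)J_{k+1}(\bar P,1)+(1-\nu(1-p))J_{k+1}(f(P),0)$, $L_k^0(P,\nu)=\beta[\nu q\,\mathrm{tr}\bar P+(1-\nu q)\mathrm{tr}f(P)]+(1-\beta)\nu E+\nu qJ_{k+1}(\bar P,1)+(1-\nu q)J_{k+1}(f(P),0)$. Then $P\mapsto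 L_k^1(P,1)-L_k^1(P,0)$ and $P\mapsto L_k^0(P,1)-L_k^0(P,0)$ are decreasing functions on $\mathcal{S}$.
   Context: For symmetric matrices, $X\le Y$ means $Y-X$ is positive semidefinite; a function $F$ on $\mathcal{S}$ is decreasing if $X\le Y\Rightarrow F(X)\ge F(Y)$. The setting models Markovian packet drops with $p=\mathbb{P}(\gamma_k=0\mid\gamma_{k-1}=1)$ and $q=\mathbb{P}(\gamma_k=1\mid\gamma_{k-1}=0)$. *)

theory Defs
  imports "HOL-Analysis.Analysis"
begin


primrec matpow :: "real^'n^'n \<Rightarrow> nat \<Rightarrow> real^'n^'n" where
  "matpow M 0 = mat 1"
| "matpow M (Suc k) = M ** matpow M k"

definition symmetric_mat :: "real^'n^'n \<Rightarrow> bool" where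
  "symmetric_mat M \<longleftrightarrow> transpose M = M"

definition psd :: "real^'n^'n \<Rightarrow> bool" where
  "psd M \<longleftrightarrow> symmetric_mat M \<and> (\<forall>x. 0 \<le> x \<bullet> (M *v x))"

definition pd :: "real^'n^'n \<Rightarrow> bool" where
  "pd M \<longleftrightarrow> symmetric_mat M \<and> (\<forall>x. x \<noteq> 0 \<longrightarrow> 0 < x \<bullet> (M *v x))"

definition loewner_le :: "real^'n^'n \<Rightarrow> real^'n^'n \<Rightarrow> bool" where
  "loewner_le X Y \<longleftrightarrow> psd (Y - X)"

text \<open>Schur stability: powers converge to zero (all eigenvalues inside the unit disk).\<close>
definition schur_stable :: "real^'n^'n \<Rightarrow> bool" where
  "schur_stable M \<longleftrightarrow> (matpow M \<longlonglongrightarrow> 0)"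

definition detectable :: "real^'n^'n \<Rightarrow> real^'n^'m \<Rightarrow> bool" where
  "detectable A C \<longleftrightarrow> (\<exists>L :: real^'m^'n. schur_stable (A + L ** C))"

definition stabilizable :: "real^'n^'n \<Rightarrow> real^'m^'n \<Rightarrow> bool" where
  "stabilizable A B \<longleftrightarrow> (\<exists>K :: real^'n^'m. schur_stable (A + B ** K))"

definition is_psd_sqrt :: "real^'n^'n \<Rightarrow> real^'n^'n \<Rightarrow> bool" where
  "is_psd_sqrt S Q \<longleftrightarrow> psd S \<and> S ** S = Q"

definition lyap :: "real^'n^'n \<Rightarrow> real^'n^'n \<Rightarrow> real^'n^'n \<Rightarrow> real^'n^'n" where
  "lyap A Q X = A ** X ** transpose A + Q"

text \<open>Steady-state filtered error covariance of the Kalman filter: Pbar is obtained by a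
  measurement update from the prior covariance Pm = f(Pbar), where Pm is a PSD solution of
  the discrete algebraic Riccati equation.\<close>
definition kalman_steady_filtered ::
  "real^'n^'n \<Rightarrow> real^'n^'m \<Rightarrow> real^'n^'n \<Rightarrow> real^'m^'m \<Rightarrow> real^'n^'n \<Rightarrow> bool" where
  "kalman_steady_filtered A C Q R Pbar \<longleftrightarrow>
     (let Pm = lyap A Q Pbar in
        psd Pm \<and>
        Pbar = Pm - Pm ** transpose C ** matrix_inv (C ** Pm ** transpose C + R) ** C ** Pm)"

definition stage_cost ::
  "real \<Rightarrow> real \<Rightarrow> real^'n^'n \<Rightarrow> (real^'n^'n \<Rightarrow> real^'n^'n)
   \<Rightarrow> (real^'n^'n \<Rightarrow> bool \<Rightarrow> real) \<Rightarrow> real^'n^'n \<Rightarrow> real \<Rightarrow> real \<Rightarrow> real" where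
  "stage_cost \<beta> E Pbar f Jn P \<nu> c =
     \<beta> * (\<nu> * c * trace Pbar + (1 - \<nu> * c) * trace (f P)) + (1 - \<beta>) * \<nu> * E
     + \<nu> * c * Jn Pbar True + (1 - \<nu> * c) * Jn (f P) False"

text \<open>c(gamma) = gamma (1-p) + (1-gamma) q, with gamma in {0,1} encoded as bool.\<close>
definition arr :: "real \<Rightarrow> real \<Rightarrow> bool \<Rightarrow> real" where
  "arr p q \<gamma> = of_bool \<gamma> * (1 - p) + (1 - of_bool \<gamma>) * q"

text \<open>Backward recursion indexed by the number m of remaining stages:
  Jrem 0 = J_{K+1} = 0, and Jrem (Suc m) = J_{K-m}.\<close>
fun Jrem ::
  "real \<Rightarrow> real \<Rightarrow> real \<Rightarrow> real \<Rightarrow> real^'n^'n \<Rightarrow> (real^'n^'n \<Rightarrow> real^'n^'n)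
   \<Rightarrow> nat \<Rightarrow> real^'n^'n \<Rightarrow> bool \<Rightarrow> real" where
  "Jrem p q \<beta> E Pbar f 0 P \<gamma> = 0"
| "Jrem p q \<beta> E Pbar f (Suc m) P \<gamma> =
     min (stage_cost \<beta> E Pbar f (Jrem p q \<beta> E Pbar f m) P 0 (arr p q \<gamma>))
         (stage_cost \<beta> E Pbar f (Jrem p q \<beta> E Pbar f m) P 1 (arr p q \<gamma>))"

definition Jfun ::
  "real \<Rightarrow> real \<Rightarrow> real \<Rightarrow> real \<Rightarrow> real^'n^'n \<Rightarrow> (real^'n^'n \<Rightarrow> real^'n^'n)
   \<Rightarrow> nat \<Rightarrow> nat \<Rightarrow> real^'n^'n \<Rightarrow> bool \<Rightarrow> real" where
  "Jfun p q \<beta> E Pbar f K k = Jrem p q \<beta> E Pbar f (K + 1 - k)"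

definition L1 where
  "L1 p q \<beta> E Pbar f K k P \<nu> = stage_cost \<beta> E Pbar f (Jfun p q \<beta> E Pbar f K (k + 1)) P \<nu> (1 - p)"

definition L0 where
  "L0 p q \<beta> E Pbar f K k P \<nu> = stage_cost \<beta> E Pbar f (Jfun p q \<beta> E Pbar f K (k + 1)) P \<nu> q"

definition decreasing_on :: "(real^'n^'n) set \<Rightarrow> (real^'n^'n \<Rightarrow> real) \<Rightarrow> bool" where
  "decreasing_on S F \<longleftrightarrow> (\<forall>X\<in>S. \<forall>Y\<in>S. loewner_le X Y \<longrightarrow> F Y \<le> F X)"

end

theory Submission
  imports Defs
begin

lemma mat_sub_l: "(A::real^'n^'m) ** (B - C) = A ** B - A ** C"
  by (simp add: matrix_matrix_mult_def vec_eq_iff sum_subtractf algebra_simps)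
lemma mat_sub_r: "((B::real^'n^'m) - C) ** A = B ** A - C ** A"
  by (simp add: matrix_matrix_mult_def vec_eq_iff sum_subtractf algebra_simps)

lemma quad_helper:
  fixes A D :: "real^'n^'n"
  shows "x \<bullet> ((A ** D ** transpose A) *v x) = (transpose A *v x) \<bullet> (D *v (transpose A *v x))"
proof -
  have "x \<bullet> ((A ** D ** transpose A) *v x) = x \<bullet> (A *v (D *v (transpose A *v x)))"
    by (simp only: matrix_vector_mul_assoc matrix_mul_assoc)
  also have "\<dots> = (x v* A) \<bullet> (D *v (transpose A *v x))"
    by (rule dot_lmul_matrix[symmetric])
  also have "x v* A = transpose A *v x" by (rule transpose_matrix_vector[symmetric])
  finally show ?thesis .
qed

lemma eqq:
  fixes A Q X Y :: "real^'n^'n"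
  shows "lyap A Q Y - lyap A Q X = A ** (Y - X) ** transpose A"
  unfolding lyap_def mat_sub_l mat_sub_r by simp

lemma symm:
  fixes A D :: "real^'n^'n"
  assumes "transpose D = D"
  shows "transpose (A ** D ** transpose A) = A ** D ** transpose A"
  by (simp only: assms matrix_transpose_mul transpose_transpose matrix_mul_assoc)

lemma lyap_mono:
  fixes A Q X Y :: "real^'n^'n"
  assumes "loewner_le X Y"
  shows "loewner_le (lyap A Q X) (lyap A Q Y)"
proof -
  let ?D = "Y - X"
  have d: "psd ?D" using assms unfolding loewner_le_def .
  have eq: "lyap A Q Y - lyap A Q X = A ** ?D ** transpose A" by (rule eqq)
  have dsym: "transpose ?D = ?D" using d unfolding psd_def symmetric_mat_def by (rule conjunct1)
  have sym: "transpose (A ** ?D ** transpose A) = A ** ?D ** transpose A" using dsym by (rule symm)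
  have "0 \<le> x \<bullet> ((A ** ?D ** transpose A) *v x)" for x
  proof -
    have e: "x \<bullet> ((A ** ?D ** transpose A) *v x) = (transpose A *v x) \<bullet> (?D *v (transpose A *v x))"
      by (rule quad_helper)
    have "0 \<le> (transpose A *v x) \<bullet> (?D *v (transpose A *v x))" using d unfolding psd_def by (rule conjunct2[THEN spec])
    thus ?thesis unfolding e .
  qed
  hence qx: "\<forall>x. 0 \<le> x \<bullet> ((A ** ?D ** transpose A) *v x)" by (rule allI)
  have "psd (A ** ?D ** transpose A)" unfolding psd_def symmetric_mat_def using sym qx by (rule conjI)
  thus ?thesis unfolding loewner_le_def eq .
qed

lemma trace_mono:
  fixes X Y :: "real^'n^'n"
  assumes "loewner_le X Y"
  shows "trace X \<le> trace Y"
proof -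
  let ?D = "Y - X"
  have d: "psd ?D" using assms by (simp add: loewner_le_def)
  have "0 \<le> ?D $ i $ i" for i
  proof -
    have "0 \<le> axis i 1 \<bullet> (?D *v axis i 1)" using d by (simp add: psd_def)
    also have "axis i 1 \<bullet> (?D *v axis i 1) = ?D $ i $ i"
      by (simp add: inner_axis' matrix_vector_mult_basis column_def)
    finally show ?thesis .
  qed
  hence "0 \<le> trace ?D" by (simp add: trace_def sum_nonneg)
  thus ?thesis by (simp add: trace_sub)
qed

lemma arr_bounds: "0 \<le> p \<Longrightarrow> p \<le> 1 \<Longrightarrow> 0 \<le> q \<Longrightarrow> q \<le> 1 \<Longrightarrow> 0 \<le> arr p q g \<and> arr p q g \<le> 1"
  by (cases g) (auto simp: arr_def)

lemma aux1:
  fixes a b t1 t2 j1 j2 T e J :: real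
  assumes "(1-a)*(b*t1+j1) \<le> (1-a)*(b*t2+j2)"
  shows "b*(a*T+(1-a)*t1)+e+a*J+(1-a)*j1 \<le> b*(a*T+(1-a)*t2)+e+a*J+(1-a)*j2"
proof -
  have "b*(a*T+(1-a)*t1)+e+a*J+(1-a)*j1 = b*a*T+e+a*J+(1-a)*(b*t1+j1)" by (simp add: algebra_simps)
  moreover have "b*(a*T+(1-a)*t2)+e+a*J+(1-a)*j2 = b*a*T+e+a*J+(1-a)*(b*t2+j2)" by (simp add: algebra_simps)
  ultimately show ?thesis using assms by linarith
qed

lemma aux2:
  fixes c b t1 t2 j1 j2 T E J :: real
  assumes "c*(b*t1+j1) \<le> c*(b*t2+j2)"
  shows "b*(1*c*T+(1-1*c)*t2)+(1-b)*1*E+1*c*J+(1-1*c)*j2 - (b*(0*c*T+(1-0*c)*t2)+(1-b)*0*E+0*c*J+(1-0*c)*j2)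
    \<le> b*(1*c*T+(1-1*c)*t1)+(1-b)*1*E+1*c*J+(1-1*c)*j1 - (b*(0*c*T+(1-0*c)*t1)+(1-b)*0*E+0*c*J+(1-0*c)*j1)"
proof -
  have e: "\<And>t j. b*(1*c*T+(1-1*c)*t)+(1-b)*1*E+1*c*J+(1-1*c)*j - (b*(0*c*T+(1-0*c)*t)+(1-b)*0*E+0*c*J+(1-0*c)*j)
     = b*c*T+(1-b)*E+c*J - c*(b*t+j)" by (simp add: algebra_simps)
  show ?thesis using assms e[of t1 j1] e[of t2 j2] by linarith
qed

lemma stage_mono:
  fixes A Q X Y :: "real^'n^'n"
  assumes "loewner_le X Y" "0 \<le> \<beta>" "0 \<le> c" "c \<le> 1" "\<nu> = 0 \<or> \<nu> = 1"
    and Jm: "\<And>X Y. loewner_le X Y \<Longrightarrow> Jn X False \<le> Jn Y False"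
  shows "stage_cost \<beta> E Pbar (lyap A Q) Jn X \<nu> c \<le> stage_cost \<beta> E Pbar (lyap A Q) Jn Y \<nu> c"
proof -
  have l: "loewner_le (lyap A Q X) (lyap A Q Y)" using assms(1) by (rule lyap_mono)
  have t: "trace (lyap A Q X) \<le> trace (lyap A Q Y)" using l by (rule trace_mono)
  have j: "Jn (lyap A Q X) False \<le> Jn (lyap A Q Y) False" using l by (rule Jm)
  have nn: "0 \<le> 1 - \<nu> * c" using assms by auto
  have "(1 - \<nu> * c) * (\<beta> * trace (lyap A Q X) + Jn (lyap A Q X) False)
      \<le> (1 - \<nu> * c) * (\<beta> * trace (lyap A Q Y) + Jn (lyap A Q Y) False)"
    using nn t j assms(2) by (intro mult_left_mono add_mono mult_left_mono) auto
  thus ?thesis unfolding stage_cost_def by (rule aux1)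
qed

lemma Jrem_mono:
  fixes A Q :: "real^'n^'n"
  assumes "0 \<le> p" "p \<le> 1" "0 \<le> q" "q \<le> 1" "0 \<le> \<beta>"
  shows "loewner_le X Y \<Longrightarrow> Jrem p q \<beta> E Pbar (lyap A Q) m X g \<le> Jrem p q \<beta> E Pbar (lyap A Q) m Y g"
proof (induction m arbitrary: X Y g)
  case 0 then show ?case by simp
next
  case (Suc m)
  have b: "0 \<le> arr p q g" "arr p q g \<le> 1" using arr_bounds assms by blast+
  have "\<And>X Y. loewner_le X Y \<Longrightarrow> Jrem p q \<beta> E Pbar (lyap A Q) m X False \<le> Jrem p q \<beta> E Pbar (lyap A Q) m Y False"
    using Suc.IH by blast
  note h = this
  have nu0: "(0::real) = 0 \<or> (0::real) = 1" and nu1: "(1::real) = 0 \<or> (1::real) = 1" by simp_all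
  have s0: "stage_cost \<beta> E Pbar (lyap A Q) (Jrem p q \<beta> E Pbar (lyap A Q) m) X 0 (arr p q g)
     \<le> stage_cost \<beta> E Pbar (lyap A Q) (Jrem p q \<beta> E Pbar (lyap A Q) m) Y 0 (arr p q g)"
    using stage_mono[where Jn="Jrem p q \<beta> E Pbar (lyap A Q) m", OF Suc.prems assms(5) b nu0 h] .
  have s1: "stage_cost \<beta> E Pbar (lyap A Q) (Jrem p q \<beta> E Pbar (lyap A Q) m) X 1 (arr p q g)
     \<le> stage_cost \<beta> E Pbar (lyap A Q) (Jrem p q \<beta> E Pbar (lyap A Q) m) Y 1 (arr p q g)"
    using stage_mono[where Jn="Jrem p q \<beta> E Pbar (lyap A Q) m", OF Suc.prems assms(5) b nu1 h] .
  show ?case using s0 s1 by (simp add: min_le_iff_disj)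
qed

lemma diff_dec:
  fixes A Q :: "real^'n^'n"
  assumes "0 \<le> p" "p \<le> 1" "0 \<le> q" "q \<le> 1" "0 \<le> \<beta>" "0 \<le> c"
  shows "decreasing_on S (\<lambda>P. stage_cost \<beta> E Pbar (lyap A Q) (Jrem p q \<beta> E Pbar (lyap A Q) m) P 1 c
                          - stage_cost \<beta> E Pbar (lyap A Q) (Jrem p q \<beta> E Pbar (lyap A Q) m) P 0 c)"
  unfolding decreasing_on_def
proof (intro ballI impI)
  fix X Y :: "real^'n^'n" assume le: "loewner_le X Y"
  have l: "loewner_le (lyap A Q X) (lyap A Q Y)" using le by (rule lyap_mono)
  have t: "trace (lyap A Q X) \<le> trace (lyap A Q Y)" using l by (rule trace_mono)
  have j: "Jrem p q \<beta> E Pbar (lyap A Q) m (lyap A Q X) False \<le> Jrem p q \<beta> E Pbar (lyap A Q) m (lyap A Q Y) False"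
    using Jrem_mono[OF assms(1-5) l] .
  have "c * (\<beta> * trace (lyap A Q X) + Jrem p q \<beta> E Pbar (lyap A Q) m (lyap A Q X) False)
      \<le> c * (\<beta> * trace (lyap A Q Y) + Jrem p q \<beta> E Pbar (lyap A Q) m (lyap A Q Y) False)"
    using t j assms(5,6) by (intro mult_left_mono add_mono) auto
  thus "stage_cost \<beta> E Pbar (lyap A Q) (Jrem p q \<beta> E Pbar (lyap A Q) m) Y 1 c
       - stage_cost \<beta> E Pbar (lyap A Q) (Jrem p q \<beta> E Pbar (lyap A Q) m) Y 0 c
       \<le> stage_cost \<beta> E Pbar (lyap A Q) (Jrem p q \<beta> E Pbar (lyap A Q) m) X 1 c
       - stage_cost \<beta> E Pbar (lyap A Q) (Jrem p q \<beta> E Pbar (lyap A Q) m) X 0 c"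
    unfolding stage_cost_def by (rule aux2)
qed

theorem lemma6:
  fixes A Q Pbar :: "real^'n^'n" and C :: "real^'n^'m" and R :: "real^'m^'m"
    and p q \<beta> E :: real and K k :: nat
  assumes "psd Q" and "pd R"
    and "detectable A C"
    and "\<exists>S. is_psd_sqrt S Q \<and> stabilizable A S"
    and "kalman_steady_filtered A C Q R Pbar"
    and "0 \<le> p" "p \<le> 1" "0 \<le> q" "q \<le> 1" "0 \<le> E" "0 < \<beta>" "\<beta> < 1"
    and "1 \<le> K" "1 \<le> k" "k \<le> K"
  shows "decreasing_on {(lyap A Q ^^ n) Pbar | n. True}
           (\<lambda>P. L1 p q \<beta> E Pbar (lyap A Q) K k P 1 - L1 p q \<beta> E Pbar (lyap A Q) K k P 0)
       \<and> decreasing_on {(lyap A Q ^^ n) Pbar | n. True}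
           (\<lambda>P. L0 p q \<beta> E Pbar (lyap A Q) K k P 1 - L0 p q \<beta> E Pbar (lyap A Q) K k P 0)"
proof -
  have b: "0 \<le> \<beta>" using assms by simp
  have kk: "K + 1 - (k + 1) = K - k" by simp
  have c1: "0 \<le> 1 - p" using assms by simp
  have 1: "decreasing_on {(lyap A Q ^^ n) Pbar | n. True}
           (\<lambda>P. L1 p q \<beta> E Pbar (lyap A Q) K k P 1 - L1 p q \<beta> E Pbar (lyap A Q) K k P 0)"
    unfolding L1_def Jfun_def kk by (rule diff_dec[OF assms(6-9) b c1])
  have 2: "decreasing_on {(lyap A Q ^^ n) Pbar | n. True}
           (\<lambda>P. L0 p q \<beta> E Pbar (lyap A Q) K k P 1 - L0 p q \<beta> E Pbar (lyap A Q) K k P 0)"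
    unfolding L0_def Jfun_def kk by (rule diff_dec[OF assms(6-9) b assms(8)])
  show ?thesis using 1 2 by (rule conjI)
qed

end
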